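(* Let $H=(S_1,\dots,S_\ell)$ be a partial route. For every $H'\subseteq H$ and every $\bar x\in\mathcal{X}$, $$\bar x(H')-|V_+(H')|+1\ \ge\ W_{OF}(\bar x;H)-1.$$
   Context: $G=(V,E)$ complete undirected graph, $V=\{0\}\cup V_+$ ($V_+$ customers); capacity $C>0$; scenario demands $d^\xi\in\mathbb{Q}^{V_+}_{\ge0}$ and probabilities $p_\xi\ge0$ summing to $1$, $\bar d=\sum_\xi p_\xi d^\xi$. $f(S)=\sum_{i\in S}f(i)$; $E(S)$: edges with both ends in $S$; $E(S,T)$: edges with one end in $S$ and the other in $T$ ($S,T$ disjoint); $\delta(S)$: edges with exactly one end in $S$. $\mathcal{X}$ is one of $\mathcal{X}_{\mathrm{sub}}=\{x\in[0,2]^E: x(\delta(v))=2\ \forall v\in V_+,\ x(E(S))\le|S|-1\ \forall\emptyset\ne S\subseteq V_+\}$ or $\mathcal{X}_{\mathrm{cvrp}}=\mathcal{X}_{\mathrm{sub}}\cap\{x:x(\delta(0))=2k,\ x(E(S))\le|S|-\lceil\bar d(S)/C\rceil\}$. A partial route $H=(S_1,\dots,S_\ell)$ is a tuple of pairwise disjoint nonempty subsets of $V_+$ with no index $i$ such that both $S_i$ and $S_{i+1}$ have more than one element; $V_+(H)=\bigcup_iS_i$; $H'\subseteq H$ means $H'=(S_i,\dots,S_j)$ for some $1\le i\le j\le\ell$. $x(H)=\sum_{i\in[\ell]}x(E(S_i))+\sum_{i\in[\ell-1]}x(E(S_i,S_{i+1}))$, and $W_{OF}(x;H)=1+(x(H)-|V_+(H)|+1)+\sum_{i\in\{2,\ell-1\}\cap[\ell]}(x(E(S_i))-|S_i|+1)$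 (the index set $\{2,\ell-1\}\cap[\ell]$ is a set, so a repeated index is counted once). *)

theory Defs
  imports Complex_Main
begin

text \<open>Complete undirected graph on V = {depot} \<union> Vp; edges are 2-element vertex sets.
  An edge vector x assigns a real to each edge (values off the edge set are irrelevant).\<close>

definition edges :: "'a set \<Rightarrow> 'a set set" where
  "edges V = {{u, v} | u v. u \<in> V \<and> v \<in> V \<and> u \<noteq> v}"

definition Ein :: "'a set \<Rightarrow> 'a set \<Rightarrow> 'a set set" where
  "Ein V S = {e \<in> edges V. e \<subseteq> S}"

definition Ebetween :: "'a set \<Rightarrow> 'a set \<Rightarrow> 'a set \<Rightarrow> 'a set set" where
  "Ebetween V S T = {e \<in> edges V. \<exists>u v. e = {u, v} \<and> u \<in> S \<and> v \<in> T}"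

definition cut :: "'a set \<Rightarrow> 'a set \<Rightarrow> 'a set set" where
  "cut V S = {e \<in> edges V. card (e \<inter> S) = 1}"

definition xs :: "('a set \<Rightarrow> real) \<Rightarrow> 'a set set \<Rightarrow> real" where
  "xs x F = (\<Sum>e\<in>F. x e)"

definition Xsub :: "'a \<Rightarrow> 'a set \<Rightarrow> ('a set \<Rightarrow> real) set" where
  "Xsub depot Vp = {x. (\<forall>e\<in>edges (insert depot Vp). 0 \<le> x e \<and> x e \<le> 2)
     \<and> (\<forall>v\<in>Vp. xs x (cut (insert depot Vp) {v}) = 2)
     \<and> (\<forall>S. S \<noteq> {} \<and> S \<subseteq> Vp \<longrightarrow> xs x (Ein (insert depot Vp) S) \<le> real (card S) - 1)}"

definition dbar :: "'b set \<Rightarrow> ('b \<Rightarrow> real) \<Rightarrow> ('b \<Rightarrow> 'a \<Rightarrow> real) \<Rightarrow> 'a \<Rightarrow> real" where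
  "dbar Xi p d i = (\<Sum>\<xi>\<in>Xi. p \<xi> * d \<xi> i)"

definition Xcvrp :: "'a \<Rightarrow> 'a set \<Rightarrow> nat \<Rightarrow> real \<Rightarrow> ('a \<Rightarrow> real) \<Rightarrow> ('a set \<Rightarrow> real) set" where
  "Xcvrp depot Vp k C db = Xsub depot Vp \<inter> {x.
      xs x (cut (insert depot Vp) {depot}) = 2 * real k
    \<and> (\<forall>S. S \<noteq> {} \<and> S \<subseteq> Vp \<longrightarrow>
          xs x (Ein (insert depot Vp) S) \<le> real (card S) - of_int \<lceil>(\<Sum>i\<in>S. db i) / C\<rceil>)}"

definition partial_route :: "'a set \<Rightarrow> 'a set list \<Rightarrow> bool" where
  "partial_route Vp H \<longleftrightarrow>
     (\<forall>i<length H. H ! i \<noteq> {} \<and> H ! i \<subseteq> Vp)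
   \<and> (\<forall>i<length H. \<forall>j<length H. i \<noteq> j \<longrightarrow> H ! i \<inter> H ! j = {})
   \<and> \<not> (\<exists>i. Suc i < length H \<and> card (H ! i) > 1 \<and> card (H ! Suc i) > 1)"

text \<open>H' \<subseteq> H: H' = (S_i, ..., S_j), 1 \<le> i \<le> j \<le> l (here 0-indexed i \<le> j < length H).\<close>
definition subroute :: "'a set list \<Rightarrow> 'a set list \<Rightarrow> bool" where
  "subroute H' H \<longleftrightarrow> (\<exists>i j. i \<le> j \<and> j < length H \<and> H' = drop i (take (Suc j) H))"

definition Vplus :: "'a set list \<Rightarrow> 'a set" where
  "Vplus H = \<Union> (set H)"

definition xroute :: "'a set \<Rightarrow> ('a set \<Rightarrow> real) \<Rightarrow> 'a set list \<Rightarrow> real" where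
  "xroute V x H = (\<Sum>i<length H. xs x (Ein V (H ! i)))
      + (\<Sum>i<length H - 1. xs x (Ebetween V (H ! i) (H ! Suc i)))"

text \<open>W_OF with 1-indexed positions: the extra sum ranges over the set {2, l-1} \<inter> {1..l}.\<close>
definition W_OF :: "'a set \<Rightarrow> ('a set \<Rightarrow> real) \<Rightarrow> 'a set list \<Rightarrow> real" where
  "W_OF V x H = 1 + (xroute V x H - real (card (Vplus H)) + 1)
     + (\<Sum>i\<in>{2, length H - 1} \<inter> {1..length H}.
          xs x (Ein V (H ! (i - 1))) - real (card (H ! (i - 1))) + 1)"

end

theory Submission imports Defs begin

lemma fin_edges: "finite V \<Longrightarrow> finite (edges V)"
  by (rule finite_subset[of _ "Pow V"]) (auto simp: edges_def)

lemma Ein_sub: "Ein V S \<subseteq> edges V" by (auto simp: Ein_def)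
lemma Eb_sub: "Ebetween V S T \<subseteq> edges V" by (auto simp: Ebetween_def)
lemma cut_sub: "cut V S \<subseteq> edges V" by (auto simp: cut_def)

lemma Ein_single: "Ein V {v} = {}"
  by (auto simp: Ein_def edges_def)

lemma Ein_empty: "Ein V {} = {}"
  by (auto simp: Ein_def edges_def)

lemma Eb_mono: "T \<subseteq> U \<Longrightarrow> Ebetween V S T \<subseteq> Ebetween V S U"
  by (auto simp: Ebetween_def)

fun xr :: "'a set \<Rightarrow> ('a set \<Rightarrow> real) \<Rightarrow> 'a set list \<Rightarrow> real" where
  "xr V x [] = 0"
| "xr V x [S] = xs x (Ein V S)"
| "xr V x (S # T # K) = xs x (Ein V S) + xs x (Ebetween V S T) + xr V x (T # K)"

lemma xroute_xr: "xroute V x K = xr V x K"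
proof (induction V x K rule: xr.induct)
  case (1 V x) then show ?case by (simp add: xroute_def)
next
  case (2 V x S) then show ?case by (simp add: xroute_def)
next
  case (3 V x S T K)
  then show ?case
    by (simp add: xroute_def sum.lessThan_Suc_shift del: sum.lessThan_Suc)
qed

lemma xr_append: "A \<noteq> [] \<Longrightarrow> K \<noteq> [] \<Longrightarrow>
   xr V x (A @ K) = xr V x A + xs x (Ebetween V (last A) (hd K)) + xr V x K"
proof (induction A rule: induct_list012)
  case 1 then show ?case by simp
next
  case (2 a) then show ?case by (cases K) auto
next
  case (3 a b zs) then show ?case by auto
qed

lemma Vplus_simps[simp]: "Vplus [] = {}" "Vplus (S # K) = S \<union> Vplus K"
  "Vplus (A @ B) = Vplus A \<union> Vplus B"
  by (auto simp: Vplus_def)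

fun D :: "'a set \<Rightarrow> 'a set list \<Rightarrow> bool" where
  "D Vp [] = True"
| "D Vp (S # K) = (S \<noteq> {} \<and> S \<subseteq> Vp \<and> S \<inter> Vplus K = {} \<and> D Vp K)"

lemma D_append[simp]: "D Vp (A @ B) \<longleftrightarrow> D Vp A \<and> D Vp B \<and> Vplus A \<inter> Vplus B = {}"
  by (induction A) auto

lemma D_sub: "D Vp K \<Longrightarrow> Vplus K \<subseteq> Vp"
  by (induction K) auto

lemma D_of_idx:
  "(\<forall>i<length K. K!i \<noteq> {} \<and> K!i \<subseteq> Vp) \<Longrightarrow>
   (\<forall>i<length K. \<forall>j<length K. i \<noteq> j \<longrightarrow> K!i \<inter> K!j = {}) \<Longrightarrow> D Vp K"
proof (induction K)
  case Nil then show ?case by simp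
next
  case (Cons S K)
  have a: "\<forall>i<length K. K!i \<noteq> {} \<and> K!i \<subseteq> Vp"
    using Cons.prems(1) by (metis Suc_mono length_Cons nth_Cons_Suc)
  have b: "\<forall>i<length K. \<forall>j<length K. i \<noteq> j \<longrightarrow> K!i \<inter> K!j = {}"
    using Cons.prems(2) by (metis Suc_inject Suc_mono length_Cons nth_Cons_Suc)
  have c: "S \<inter> Vplus K = {}"
  proof -
    { fix T assume "T \<in> set K"
      then obtain j where j: "j < length K" "K ! j = T" by (meson in_set_conv_nth)
      have "(S#K)!0 \<inter> (S#K)!(Suc j) = {}" using Cons.prems(2)[rule_format, of 0 "Suc j"] j by simp
      then have "S \<inter> T = {}" using j by simp }
    then show ?thesis by (auto simp: Vplus_def)
  qed
  show ?case using Cons.IH[OF a b] c Cons.prems(1) by force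
qed

lemma card_Vplus_app: "finite Vp \<Longrightarrow> D Vp (A @ B) \<Longrightarrow>
  card (Vplus (A @ B)) = card (Vplus A) + card (Vplus B)"
proof -
  assume f: "finite Vp" and d: "D Vp (A @ B)"
  then have "Vplus A \<subseteq> Vp" "Vplus B \<subseteq> Vp" "Vplus A \<inter> Vplus B = {}"
    using D_sub by auto
  then show ?thesis using f by (simp add: card_Un_disjoint finite_subset)
qed

locale ctx =
  fixes V :: "'a set" and Vp :: "'a set" and x :: "'a set \<Rightarrow> real"
  assumes finV: "finite V" and VpV: "Vp \<subseteq> V"
    and nonneg: "\<forall>e\<in>edges V. 0 \<le> x e"
    and deg: "\<forall>v\<in>Vp. xs x (cut V {v}) = 2"
    and sub: "\<forall>S. S \<noteq> {} \<and> S \<subseteq> Vp \<longrightarrow> xs x (Ein V S) \<le> real (card S) - 1"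
begin

lemma finVp: "finite Vp" using finV VpV finite_subset by blast

lemma xs_mono: "F \<subseteq> G \<Longrightarrow> G \<subseteq> edges V \<Longrightarrow> xs x F \<le> xs x G"
  unfolding xs_def
  by (rule sum_mono2) (use fin_edges[OF finV] nonneg finite_subset in auto)

lemma xs_nonneg: "F \<subseteq> edges V \<Longrightarrow> 0 \<le> xs x F"
  unfolding xs_def using nonneg by (auto intro: sum_nonneg)

lemma xs_fin: "F \<subseteq> edges V \<Longrightarrow> finite F"
  using fin_edges[OF finV] finite_subset by blast

lemma xs_un: "F \<subseteq> edges V \<Longrightarrow> G \<subseteq> edges V \<Longrightarrow> F \<inter> G = {} \<Longrightarrow> xs x (F \<union> G) = xs x F + xs x G"
  unfolding xs_def by (rule sum.union_disjoint) (auto intro: xs_fin)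

lemma split3:
  assumes "S \<inter> U = {}"
  shows "xs x (Ein V S) + xs x (Ein V U) + xs x (Ebetween V S U) \<le> xs x (Ein V (S \<union> U))"
proof -
  have d1: "Ein V S \<inter> Ein V U = {}" using assms by (auto simp: Ein_def edges_def)
  have d2: "(Ein V S \<union> Ein V U) \<inter> Ebetween V S U = {}" using assms
    by (auto simp: Ein_def Ebetween_def edges_def)
  have s: "Ein V S \<union> Ein V U \<union> Ebetween V S U \<subseteq> Ein V (S \<union> U)"
    by (auto simp: Ein_def Ebetween_def)
  have "xs x (Ein V S \<union> Ein V U \<union> Ebetween V S U) = xs x (Ein V S) + xs x (Ein V U) + xs x (Ebetween V S U)"
    using xs_un[OF _ _ d2] xs_un[OF _ _ d1] Ein_sub Eb_sub by (metis Un_least)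
  moreover have "xs x (Ein V S \<union> Ein V U \<union> Ebetween V S U) \<le> xs x (Ein V (S \<union> U))"
    by (rule xs_mono[OF s Ein_sub])
  ultimately show ?thesis by simp
qed

lemma cut2:
  assumes "v \<notin> X" "v \<notin> Y" "X \<inter> Y = {}"
  shows "xs x (Ebetween V X {v}) + xs x (Ebetween V {v} Y) \<le> xs x (cut V {v})"
proof -
  have d: "Ebetween V X {v} \<inter> Ebetween V {v} Y = {}" using assms
    by (auto simp: Ebetween_def edges_def doubleton_eq_iff)
  have s: "Ebetween V X {v} \<union> Ebetween V {v} Y \<subseteq> cut V {v}"
  proof
    fix e assume e: "e \<in> Ebetween V X {v} \<union> Ebetween V {v} Y"
    then have "e \<in> edges V" by (auto simp: Ebetween_def)
    moreover have "e \<inter> {v} = {v}" using e by (auto simp: Ebetween_def)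
    ultimately show "e \<in> cut V {v}" by (simp add: cut_def)
  qed
  show ?thesis using xs_un[OF Eb_sub Eb_sub d] xs_mono[OF s cut_sub] by simp
qed

lemma G: "D Vp K \<Longrightarrow> xr V x K \<le> xs x (Ein V (Vplus K))"
proof (induction K rule: induct_list012)
  case 1 then show ?case by (simp add: Ein_empty xs_def)
next
  case (2 S) then show ?case by simp
next
  case (3 S T K)
  define U where "U = Vplus (T # K)"
  have dU: "S \<inter> U = {}" using 3(3) by (simp add: U_def)
  have "xr V x (S # T # K) = xs x (Ein V S) + xs x (Ebetween V S T) + xr V x (T # K)" by simp
  also have "\<dots> \<le> xs x (Ein V S) + xs x (Ebetween V S U) + xs x (Ein V U)"
    using 3(2) 3(3) xs_mono[OF Eb_mono Eb_sub, of T U S] by (simp add: U_def)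
  also have "\<dots> \<le> xs x (Ein V (S \<union> U))" using split3[OF dU] by simp
  finally show ?case by (simp add: U_def)
qed

lemma G': "D Vp K \<Longrightarrow> K \<noteq> [] \<Longrightarrow> xr V x K \<le> real (card (Vplus K)) - 1"
proof -
  assume d: "D Vp K" and ne: "K \<noteq> []"
  then have "Vplus K \<noteq> {}" by (cases K) auto
  then have "xs x (Ein V (Vplus K)) \<le> real (card (Vplus K)) - 1" using sub D_sub[OF d] by blast
  then show ?thesis using G[OF d] by linarith
qed

abbreviation sl :: "'a set \<Rightarrow> real" where
  "sl S \<equiv> xs x (Ein V S) - real (card S) + 1"

lemma LemL: "A \<noteq> [] \<Longrightarrow> D Vp (A @ [S]) \<Longrightarrow>
   xr V x A + xs x (Ebetween V (last A) S) \<le> real (card (Vplus A)) - sl S"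
proof -
  assume ne: "A \<noteq> []" and d: "D Vp (A @ [S])"
  have "xr V x (A @ [S]) = xr V x A + xs x (Ebetween V (last A) S) + xs x (Ein V S)"
    using xr_append[OF ne, of "[S]"] by simp
  moreover have "xr V x (A @ [S]) \<le> real (card (Vplus (A @ [S]))) - 1" using G'[OF d] by simp
  moreover have "card (Vplus (A @ [S])) = card (Vplus A) + card S"
    using card_Vplus_app[OF finVp d] by simp
  ultimately show ?thesis by simp
qed

lemma LemR: "B \<noteq> [] \<Longrightarrow> D Vp (S # B) \<Longrightarrow>
   xs x (Ebetween V S (hd B)) + xr V x B \<le> real (card (Vplus B)) - sl S"
proof -
  assume ne: "B \<noteq> []" and d: "D Vp (S # B)"
  have "xr V x ([S] @ B) = xs x (Ein V S) + xs x (Ebetween V S (hd B)) + xr V x B"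
    using xr_append[OF _ ne, of "[S]"] by simp
  moreover have "xr V x ([S] @ B) \<le> real (card (Vplus ([S] @ B))) - 1" using G'[of "[S] @ B"] d by simp
  moreover have "card (Vplus ([S] @ B)) = card S + card (Vplus B)"
    using card_Vplus_app[OF finVp, of "[S]" B] d by simp
  ultimately show ?thesis by simp
qed

lemma LemL2: "A0 \<noteq> [] \<Longrightarrow> D Vp (A0 @ [{v}] @ [S]) \<Longrightarrow>
   xr V x (A0 @ [{v}]) + xs x (Ebetween V {v} S) \<le> real (card (Vplus (A0 @ [{v}])))"
proof -
  assume ne: "A0 \<noteq> []" and d: "D Vp (A0 @ [{v}] @ [S])"
  have e: "xr V x (A0 @ [{v}]) = xr V x A0 + xs x (Ebetween V (last A0) {v})"
    using xr_append[OF ne, of "[{v}]"] by (simp add: Ein_single xs_def)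
  have la: "last A0 \<subseteq> Vplus A0" using ne last_in_set unfolding Vplus_def by blast
  have v: "v \<in> Vp" using d by simp
  have "xs x (Ebetween V (last A0) {v}) + xs x (Ebetween V {v} S) \<le> 2"
    using cut2[of v "last A0" S] deg v d la by auto
  moreover have "xr V x A0 \<le> real (card (Vplus A0)) - 1" using G'[OF _ ne] d by simp
  moreover have "card (Vplus (A0 @ [{v}])) = card (Vplus A0) + 1"
    using card_Vplus_app[OF finVp, of A0 "[{v}]"] d by simp
  ultimately show ?thesis using e by simp
qed

lemma LemR2: "B0 \<noteq> [] \<Longrightarrow> D Vp (S # {v} # B0) \<Longrightarrow>
   xs x (Ebetween V S {v}) + xr V x ({v} # B0) \<le> real (card (Vplus ({v} # B0)))"
proof -
  assume ne: "B0 \<noteq> []" and d: "D Vp (S # {v} # B0)"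
  have e: "xr V x ({v} # B0) = xs x (Ebetween V {v} (hd B0)) + xr V x B0"
    using xr_append[OF _ ne, of "[{v}]"] by (simp add: Ein_single xs_def)
  have la: "hd B0 \<subseteq> Vplus B0" using ne hd_in_set unfolding Vplus_def by blast
  have v: "v \<in> Vp" using d by simp
  have "xs x (Ebetween V S {v}) + xs x (Ebetween V {v} (hd B0)) \<le> 2"
    using cut2[of v S "hd B0"] deg v d la by auto
  moreover have "xr V x B0 \<le> real (card (Vplus B0)) - 1" using G'[OF _ ne] d by simp
  moreover have "card (Vplus ({v} # B0)) = 1 + card (Vplus B0)"
    using card_Vplus_app[OF finVp, of "[{v}]" B0] d by simp
  ultimately show ?thesis using e by simp
qed

end

lemma xr3: "P \<noteq> [] \<Longrightarrow> xr V x (A @ P @ B) =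
   (if A = [] then 0 else xr V x A + xs x (Ebetween V (last A) (hd P))) + xr V x P
   + (if B = [] then 0 else xs x (Ebetween V (last P) (hd B)) + xr V x B)"
  by (cases "A = []"; cases "B = []") (simp_all add: xr_append)

lemma sum_le_one: "finite I \<Longrightarrow> t \<in> I \<Longrightarrow> \<forall>u\<in>I. (g u :: real) \<le> 0 \<Longrightarrow> sum g I \<le> g t"
proof -
  assume f: "finite I" and t: "t \<in> I" and n: "\<forall>u\<in>I. (g u :: real) \<le> 0"
  have "sum g I = g t + sum g (I - {t})" using sum.remove[OF f t] by simp
  moreover have "sum g (I - {t}) \<le> 0" using n by (intro sum_nonpos) auto
  ultimately show ?thesis by simp
qed

lemma card1_sing: "finite S \<Longrightarrow> S \<noteq> {} \<Longrightarrow> \<not> card S > 1 \<Longrightarrow> \<exists>v. S = {v}"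
  by (metis One_nat_def card_0_eq card_1_singletonE less_one linorder_neqE_nat)

theorem lemma9:
  fixes depot :: 'a and Vp :: "'a set" and k :: nat and C :: real
    and Xi :: "'b set" and p :: "'b \<Rightarrow> real" and d :: "'b \<Rightarrow> 'a \<Rightarrow> real"
    and H H' :: "'a set list" and x :: "'a set \<Rightarrow> real"
  assumes "finite Vp" and "depot \<notin> Vp"
    and "C > 0"
    and "finite Xi" and "\<forall>\<xi>\<in>Xi. p \<xi> \<ge> 0" and "(\<Sum>\<xi>\<in>Xi. p \<xi>) = 1"
    and "\<forall>\<xi>\<in>Xi. \<forall>i\<in>Vp. d \<xi> i \<in> \<rat> \<and> d \<xi> i \<ge> 0"
    and "partial_route Vp H"
    and "subroute H' H"
    and "x \<in> Xsub depot Vp \<or> x \<in> Xcvrp depot Vp k C (dbar Xi p d)"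
  shows "xroute (insert depot Vp) x H' - real (card (Vplus H')) + 1
           \<ge> W_OF (insert depot Vp) x H - 1"
proof -
  define V where "V = insert depot Vp"
  have xsub: "x \<in> Xsub depot Vp" using assms(10) by (auto simp: Xcvrp_def)
  interpret c: ctx V Vp x
    using xsub assms(1) unfolding V_def by unfold_locales (auto simp: Xsub_def)
  have PR1: "\<forall>i<length H. H ! i \<noteq> {} \<and> H ! i \<subseteq> Vp"
    and PR2: "\<forall>i<length H. \<forall>j<length H. i \<noteq> j \<longrightarrow> H ! i \<inter> H ! j = {}"
    and PR3: "\<not> (\<exists>i. Suc i < length H \<and> card (H ! i) > 1 \<and> card (H ! Suc i) > 1)"
    using assms(8) unfolding partial_route_def by blast+
  have DH: "D Vp H" using D_of_idx[OF PR1 PR2] .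
  obtain i j where ij: "i \<le> j" "j < length H" "H' = drop i (take (Suc j) H)"
    using assms(9) unfolding subroute_def by blast
  define l where "l = length H"
  define A where "A = take i H"
  define P where "P = H'"
  define B where "B = drop (Suc j) H"
  have AP: "A @ P = take (Suc j) H"
    unfolding A_def P_def ij(3) using append_take_drop_id[of i "take (Suc j) H"] ij(1)
    by (simp add: min_def)
  have HAPB: "H = A @ P @ B" using AP unfolding B_def
    by (metis append.assoc append_take_drop_id)
  have lenA: "length A = i" using ij unfolding A_def by simp
  have lenB: "length B = l - Suc j" unfolding B_def l_def by simp
  have lenP: "length P = Suc j - i" using ij unfolding P_def by simp
  have Pne: "P \<noteq> []" using lenP ij by auto
  have hdP: "hd P = H ! i" using ij unfolding P_def by (simp add: hd_drop_conv_nth)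
  have lastP: "last P = H ! j" using ij unfolding P_def
    by (simp add: take_Suc_conv_app_nth)
  have DAPB: "D Vp (A @ P @ B)" using DH HAPB by simp
  have D1: "D Vp (A @ [hd P])"
  proof -
    have "A @ P @ B = A @ [hd P] @ tl P @ B" using Pne by simp
    then have "D Vp (A @ [hd P] @ tl P @ B)" using DAPB by metis
    then show ?thesis by (simp only: D_append append_assoc[symmetric])
  qed
  have D2: "D Vp (last P # B)"
  proof -
    have "A @ P @ B = A @ butlast P @ [last P] @ B" using Pne by simp
    then have "D Vp (A @ butlast P @ [last P] @ B)" using DAPB by metis
    then show ?thesis by (simp only: D_append) simp
  qed
  define LP where "LP = (if A = [] then 0 else xr V x A + xs x (Ebetween V (last A) (hd P)))"
  define RP where "RP = (if B = [] then 0 else xs x (Ebetween V (last P) (hd B)) + xr V x B)"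
  have xrH: "xr V x H = LP + xr V x P + RP"
    unfolding LP_def RP_def using xr3[OF Pne, of V x A B] HAPB by simp
  have cH: "card (Vplus H) = card (Vplus A) + card (Vplus P) + card (Vplus B)"
    using card_Vplus_app[OF assms(1), of A "P @ B"] card_Vplus_app[OF assms(1), of P B] DAPB HAPB
    by simp
  have slH: "c.sl (H ! t) \<le> 0" if t: "t < l" for t
  proof -
    have "H ! t \<noteq> {} \<and> H ! t \<subseteq> Vp" using PR1 t unfolding l_def by blast
    then have "xs x (Ein V (H ! t)) \<le> real (card (H ! t)) - 1" using c.sub by blast
    then show ?thesis by simp
  qed
  have fin: "finite (H ! t)" if t: "t < l" for t
  proof -
    have "H ! t \<subseteq> Vp" using PR1 t unfolding l_def by blast
    then show ?thesis using assms(1) finite_subset by blast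
  qed
  have sl0: "\<And>t. t < l \<Longrightarrow> \<not> card (H ! t) > 1 \<Longrightarrow> c.sl (H ! t) = 0"
  proof -
    fix t assume t: "t < l" and n: "\<not> card (H ! t) > 1"
    obtain w where "H ! t = {w}" using card1_sing[OF fin[OF t] _ n] PR1 t unfolding l_def by blast
    then show "c.sl (H ! t) = 0" by (simp add: Ein_single xs_def)
  qed
  have L0: "i = 0 \<Longrightarrow> LP - card (Vplus A) = 0" using lenA unfolding LP_def by simp
  have L1: "i \<ge> 1 \<Longrightarrow> LP - card (Vplus A) \<le> - c.sl (H ! i)"
  proof -
    assume "i \<ge> 1"
    then have Ane: "A \<noteq> []" using lenA by auto
    show ?thesis using c.LemL[OF Ane D1] Ane hdP unfolding LP_def by simp
  qed
  have L2: "i \<ge> 2 \<Longrightarrow> LP - card (Vplus A) \<le> 0"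
  proof -
    assume i2: "i \<ge> 2"
    show ?thesis
    proof (cases "card (H ! i) > 1")
      case False
      then show ?thesis using L1 i2 sl0[of i] ij unfolding l_def by simp
    next
      case True
      then have "\<not> card (H ! (i - 1)) > 1" using PR3 i2 ij
        by (metis Suc_diff_1 Suc_le_lessD le_less_trans less_le_trans numeral_2_eq_2 zero_less_Suc)
      then obtain v where v: "H ! (i - 1) = {v}"
        using card1_sing[OF fin[of "i - 1"]] PR1 ij i2 unfolding l_def by fastforce
      define A0 where "A0 = take (i - 1) H"
      have AA0: "A = A0 @ [{v}]" unfolding A_def A0_def
        using take_Suc_conv_app_nth[of "i - 1" H] v ij i2 by simp
      have A0ne: "A0 \<noteq> []" unfolding A0_def using ij i2 by (cases H) auto
      have "D Vp (A0 @ [{v}] @ [hd P])" using D1 AA0 by simp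
      from c.LemL2[OF A0ne this]
      show ?thesis unfolding LP_def using AA0 by simp
    qed
  qed
  have R0: "Suc j = l \<Longrightarrow> RP - card (Vplus B) = 0" using lenB unfolding RP_def by simp
  have R1: "Suc j < l \<Longrightarrow> RP - card (Vplus B) \<le> - c.sl (H ! j)"
  proof -
    assume "Suc j < l"
    then have Bne: "B \<noteq> []" using lenB by auto
    show ?thesis using c.LemR[OF Bne D2] Bne lastP unfolding RP_def by simp
  qed
  have R2: "j + 3 \<le> l \<Longrightarrow> RP - card (Vplus B) \<le> 0"
  proof -
    assume j3: "j + 3 \<le> l"
    show ?thesis
    proof (cases "card (H ! j) > 1")
      case False
      then show ?thesis using R1 j3 sl0[of j] ij unfolding l_def by simp
    next
      case True
      then have "\<not> card (H ! Suc j) > 1" using PR3 j3 unfolding l_def by auto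
      then obtain v where v: "H ! Suc j = {v}"
        using card1_sing[OF fin[of "Suc j"]] PR1 j3 unfolding l_def by fastforce
      define B0 where "B0 = drop (Suc (Suc j)) H"
      have BB0: "B = {v} # B0" unfolding B_def B0_def
        using Cons_nth_drop_Suc[of "Suc j" H] v j3 unfolding l_def by simp
      have B0ne: "B0 \<noteq> []" unfolding B0_def using j3 unfolding l_def by simp
      have "D Vp (last P # {v} # B0)" using D2 BB0 by simp
      from c.LemR2[OF B0ne this]
      show ?thesis unfolding RP_def using BB0 by simp
    qed
  qed
  define I where "I = {2, l - 1} \<inter> {1..l}"
  define Sg where "Sg = (\<Sum>t\<in>I. xs x (Ein V (H ! (t - 1))) - real (card (H ! (t - 1))) + 1)"
  have Inp: "\<forall>u\<in>I. xs x (Ein V (H ! (u - 1))) - real (card (H ! (u - 1))) + 1 \<le> 0"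
    using slH unfolding I_def by auto
  have finI: "finite I" unfolding I_def by simp
  have key: "LP - card (Vplus A) + (RP - card (Vplus B)) + Sg \<le> 0"
  proof -
    consider (a) "i = 1" "j + 2 = l" "l \<noteq> 3" | (b) "i = 1" "j + 2 = l" "l = 3"
      | (c) "i = 1" "j + 2 \<noteq> l" | (d) "i \<noteq> 1" "j + 2 = l" | (e) "i \<noteq> 1" "j + 2 \<noteq> l" by blast
    then show ?thesis
    proof cases
      case a
      then have "I = {2, l - 1}" "(2::nat) \<noteq> l - 1" using ij unfolding I_def by auto
      moreover have "l - Suc (Suc 0) = j" using a by simp
      ultimately have "Sg = c.sl (H ! 1) + c.sl (H ! j)" unfolding Sg_def using a by simp
      then show ?thesis using L1 R1 a by simp
    next
      case b
      then have "I = {2}" unfolding I_def by auto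
      then have Sg: "Sg = c.sl (H ! 1)" unfolding Sg_def by simp
      have j1: "j = 1" using b by simp
      have "length P = 1" using lenP b j1 by simp
      then have P1: "P = [H ! 1]" using hdP b by (cases P) auto
      have "xr V x H \<le> real (card (Vplus H)) - 1"
        using c.G'[OF DH] ij by (cases H) auto
      then show ?thesis using xrH cH Sg P1 by simp
    next
      case c
      have "2 \<in> I" unfolding I_def using c ij unfolding l_def by auto
      from sum_le_one[OF finI this Inp]
      have "Sg \<le> c.sl (H ! 1)" unfolding Sg_def by simp
      moreover have "RP - card (Vplus B) \<le> 0" using R0 R2 c ij unfolding l_def by fastforce
      ultimately show ?thesis using L1 c by simp
    next
      case d
      have "l - 1 \<in> I" unfolding I_def using d ij unfolding l_def by auto
      from sum_le_one[OF finI this Inp]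
      have "Sg \<le> c.sl (H ! (l - 1 - 1))" unfolding Sg_def by simp
      moreover have "l - 1 - 1 = j" using d by simp
      ultimately have "Sg \<le> c.sl (H ! j)" by simp
      moreover have "LP - card (Vplus A) \<le> 0" using L0 L2 d by fastforce
      ultimately show ?thesis using R1 d by simp
    next
      case e
      have "Sg \<le> 0" unfolding Sg_def using Inp by (intro sum_nonpos) auto
      moreover have "RP - card (Vplus B) \<le> 0" using R0 R2 e ij unfolding l_def by fastforce
      moreover have "LP - card (Vplus A) \<le> 0" using L0 L2 e by fastforce
      ultimately show ?thesis by simp
    qed
  qed
  have W: "W_OF V x H = 1 + (xr V x H - real (card (Vplus H)) + 1) + Sg"
    unfolding W_OF_def Sg_def I_def l_def xroute_xr ..
  show ?thesis
    using key W xrH cH unfolding V_def[symmetric] xroute_xr P_def[symmetric] by simp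
qed

end
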